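(* Fix $n\ge 1$ and let $x\in\mathcal{NM}_n$. Then $\chi^+(x)$ equals the number of minimal idempotent join-irreducible elements $g\in\mathcal{NM}_n$ such that $g\le x$.
   Context: An NM algebra is an algebra $\langle A,\wedge,\vee,\odot,\to,\bot,\top\rangle$ such that $(A,\wedge,\vee,\bot,\top)$ is a bounded lattice, $\langle A,\odot,\top\rangle$ is a commutative monoid, and for all $x,y,z$: $x\odot y\le z$ iff $x\le y\to z$; $(x\to y)\vee(y\to x)=\top$; $\neg(x\odot y)\vee((x\wedge y)\to(x\odot y))=\top$ where $\neg x:=x\to\bot$; and $\neg\neg x=x$. $\mathcal{NM}_n$ denotes the free NM algebra on $n$ generators, i.e. the Lindenbaum algebra of formulas of Nilpotent Minimum logic in the variables $x_1,\dots,x_n$ modulo logical equivalence; equivalently, the subalgebra of $[0,1]^{[0,1]^n}$ generated by the coordinate projections, where $[0,1]$ carries the standard NM operations ($\wedge=\min$, $\vee=\max$, $x\odot y=\min(x,y)$ if $x+y>1$ and $0$ otherwise, $x\to y=1$ if $x\le y$ and $\max(1-x,y)$ otherwise). It is a finite distributive lattice. A valuation on a distributive lattice $L$ is a map $\nu:L\to\mathbb{R}$ with $\nu(x)+\nu(y)=\nu(x\vee y)+\nu(x\wedge y)$ for all $x,y$; on a finite distributive lattice a valuation is uniquely determined by its values on join-irreducible elements and on $\bot$. An element is join-irreducible if it is not $\bot$ and $x=y\vee z$ implies $x=y$ or $x=z$. An element $g$ is idempotent if $g\odot g=g$; a minimal idempotent join-irreducible element is one that is minimal (in the lattice order) among the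 idempotent join-irreducible elements. The idempotent Euler characteristic $\chi^+:\mathcal{NM}_n\to\mathbb{R}$ is the unique valuation with $\chi^+(\bot)=0$ and, for each join-irreducible $g$, $\chi^+(g)=1$ if $g\odot g=g$ and $\chi^+(g)=0$ otherwise. *)

theory Defs
  imports "HOL-Analysis.Analysis"
begin

definition nm_tnorm :: "real \<Rightarrow> real \<Rightarrow> real" where
  "nm_tnorm x y = (if x + y > 1 then min x y else 0)"

definition nm_impl :: "real \<Rightarrow> real \<Rightarrow> real" where
  "nm_impl x y = (if x \<le> y then 1 else max (1 - x) y)"

definition cube :: "(real^'n) set" where
  "cube = {p. \<forall>i. 0 \<le> p $ i \<and> p $ i \<le> 1}"

text \<open>Functions [0,1]^n -> [0,1] are represented by functions on real^'n
  which are 0 outside the cube; the operations are pointwise on the cube.\<close>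
definition lift2 :: "(real \<Rightarrow> real \<Rightarrow> real) \<Rightarrow> (real^'n \<Rightarrow> real) \<Rightarrow> (real^'n \<Rightarrow> real) \<Rightarrow> (real^'n \<Rightarrow> real)" where
  "lift2 op f g = (\<lambda>p. if p \<in> cube then op (f p) (g p) else 0)"

definition nm_bot :: "real^'n \<Rightarrow> real" where
  "nm_bot = (\<lambda>p. 0)"

definition nm_top :: "real^'n \<Rightarrow> real" where
  "nm_top = (\<lambda>p. if p \<in> cube then 1 else 0)"

definition nm_proj :: "'n \<Rightarrow> real^'n \<Rightarrow> real" where
  "nm_proj i = (\<lambda>p. if p \<in> cube then p $ i else 0)"

definition nm_conj :: "(real^'n \<Rightarrow> real) \<Rightarrow> (real^'n \<Rightarrow> real) \<Rightarrow> (real^'n \<Rightarrow> real)" where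
  "nm_conj = lift2 nm_tnorm"

inductive_set NM :: "(real^'n \<Rightarrow> real) set" where
  proj: "nm_proj i \<in> NM"
| bot: "nm_bot \<in> NM"
| top: "nm_top \<in> NM"
| meet: "f \<in> NM \<Longrightarrow> g \<in> NM \<Longrightarrow> lift2 min f g \<in> NM"
| join: "f \<in> NM \<Longrightarrow> g \<in> NM \<Longrightarrow> lift2 max f g \<in> NM"
| conj: "f \<in> NM \<Longrightarrow> g \<in> NM \<Longrightarrow> lift2 nm_tnorm f g \<in> NM"
| impl: "f \<in> NM \<Longrightarrow> g \<in> NM \<Longrightarrow> lift2 nm_impl f g \<in> NM"

text \<open>The lattice order of NM_n is the pointwise order (\<le> on functions);
  join and meet are pointwise max/min, i.e. sup and inf on functions.\<close>

definition join_irreducible :: "(real^'n \<Rightarrow> real) \<Rightarrow> bool" where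
  "join_irreducible x \<longleftrightarrow> x \<in> NM \<and> x \<noteq> nm_bot \<and>
     (\<forall>y\<in>NM. \<forall>z\<in>NM. x = sup y z \<longrightarrow> x = y \<or> x = z)"

definition idempotent :: "(real^'n \<Rightarrow> real) \<Rightarrow> bool" where
  "idempotent g \<longleftrightarrow> nm_conj g g = g"

definition min_idem_ji :: "(real^'n \<Rightarrow> real) \<Rightarrow> bool" where
  "min_idem_ji g \<longleftrightarrow> join_irreducible g \<and> idempotent g \<and>
     (\<forall>h. join_irreducible h \<and> idempotent h \<and> h \<le> g \<longrightarrow> h = g)"

definition valuation_on_NM :: "((real^'n \<Rightarrow> real) \<Rightarrow> real) \<Rightarrow> bool" where
  "valuation_on_NM \<nu> \<longleftrightarrow>
     (\<forall>x\<in>NM. \<forall>y\<in>NM. \<nu> x + \<nu> y = \<nu> (sup x y) + \<nu> (inf x y))"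

text \<open>The idempotent Euler characteristic: the unique valuation with the
  prescribed values (made unique as a HOL function by being 0 off NM_n).\<close>
definition chi_plus :: "(real^'n \<Rightarrow> real) \<Rightarrow> real" where
  "chi_plus = (THE \<nu>. valuation_on_NM \<nu> \<and> \<nu> nm_bot = 0 \<and>
      (\<forall>g. join_irreducible g \<longrightarrow> \<nu> g = (if idempotent g then 1 else 0)) \<and>
      (\<forall>x. x \<notin> NM \<longrightarrow> \<nu> x = 0))"

end

theory Submission
  imports Defs
begin

type_synonym 'n atm = "bool \<times> 'n option"

definition ev :: "'n atm \<Rightarrow> real^'n \<Rightarrow> real" where
  "ev a p = (let v = (case snd a of None \<Rightarrow> 0 | Some i \<Rightarrow> p $ i) in if fst a then 1 - v else v)"

definition ng :: "'n atm \<Rightarrow> 'n atm" where "ng a = (\<not> fst a, snd a)"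

lemma ev_ng: "ev (ng a) p = 1 - ev a p"
  by (cases a) (auto simp: ev_def ng_def Let_def)

lemma ev_Z[simp]: "ev (False, None) p = 0" and ev_O[simp]: "ev (True, None) p = 1"
  by (auto simp: ev_def)

lemma ev_range: "p \<in> cube \<Longrightarrow> 0 \<le> ev a p \<and> ev a p \<le> 1"
  by (cases a) (auto simp: ev_def Let_def cube_def split: option.splits)

definition otyp :: "real^'n \<Rightarrow> 'n atm \<Rightarrow> 'n atm \<Rightarrow> bool" where
  "otyp p a b \<longleftrightarrow> ev a p \<le> ev b p"

definition rep :: "((('n::finite) atm \<Rightarrow> 'n atm \<Rightarrow> bool) \<Rightarrow> 'n atm) \<Rightarrow> real^'n \<Rightarrow> real" where
  "rep \<sigma> = (\<lambda>p. if p \<in> cube then ev (\<sigma> (otyp p)) p else 0)"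

lemma NM_rep: "f \<in> NM \<Longrightarrow> \<exists>\<sigma>. f = rep \<sigma>"
proof (induction rule: NM.induct)
  case (proj i)
  show ?case by (rule exI[of _ "\<lambda>_. (False, Some i)"]) (auto simp: rep_def nm_proj_def ev_def)
next
  case bot
  show ?case by (rule exI[of _ "\<lambda>_. (False, None)"]) (auto simp: rep_def nm_bot_def)
next
  case top
  show ?case by (rule exI[of _ "\<lambda>_. (True, None)"]) (auto simp: rep_def nm_top_def)
next
  case (meet f g)
  then obtain s1 s2 where f: "f = rep s1" and g: "g = rep s2" by blast
  show ?case
    by (rule exI[of _ "\<lambda>t. if t (s1 t) (s2 t) then s1 t else s2 t"])
       (auto simp: f g rep_def lift2_def otyp_def)
next
  case (join f g)
  then obtain s1 s2 where f: "f = rep s1" and g: "g = rep s2" by blast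
  show ?case
    by (rule exI[of _ "\<lambda>t. if t (s1 t) (s2 t) then s2 t else s1 t"])
       (auto simp: f g rep_def lift2_def otyp_def)
next
  case (conj f g)
  then obtain s1 s2 where f: "f = rep s1" and g: "g = rep s2" by blast
  show ?case
    by (rule exI[of _ "\<lambda>t. if \<not> t (s1 t) (ng (s2 t)) then (if t (s1 t) (s2 t) then s1 t else s2 t) else (False, None)"])
       (auto simp: f g rep_def lift2_def otyp_def ev_ng nm_tnorm_def)
next
  case (impl f g)
  then obtain s1 s2 where f: "f = rep s1" and g: "g = rep s2" by blast
  show ?case
    by (rule exI[of _ "\<lambda>t. if t (s1 t) (s2 t) then (True, None) else (if t (ng (s1 t)) (s2 t) then s2 t else ng (s1 t))"])
       (auto simp: f g rep_def lift2_def otyp_def ev_ng nm_impl_def)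
qed

lemma finite_NM: "finite (NM :: (real^'n \<Rightarrow> real) set)"
proof -
  have "NM \<subseteq> range (rep :: (('n atm \<Rightarrow> 'n atm \<Rightarrow> bool) \<Rightarrow> 'n atm) \<Rightarrow> _)"
    using NM_rep by blast
  thus ?thesis by (rule finite_subset) simp
qed

lemma NM_off: "f \<in> NM \<Longrightarrow> p \<notin> cube \<Longrightarrow> f p = 0"
  using NM_rep by (fastforce simp: rep_def)

lemma NM_range: "f \<in> NM \<Longrightarrow> 0 \<le> f p \<and> f p \<le> 1"
  using NM_rep ev_range by (fastforce simp: rep_def)

lemma lift2_min: "f \<in> NM \<Longrightarrow> g \<in> NM \<Longrightarrow> lift2 min f g = inf f g"
  by (rule ext) (auto simp: lift2_def NM_off inf_real_def sup_real_def)

lemma lift2_max: "f \<in> NM \<Longrightarrow> g \<in> NM \<Longrightarrow> lift2 max f g = sup f g"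
  by (rule ext) (auto simp: lift2_def NM_off inf_real_def sup_real_def)

lemma inf_NM: "f \<in> NM \<Longrightarrow> g \<in> NM \<Longrightarrow> inf f g \<in> NM"
  using NM.meet lift2_min by metis

lemma sup_NM: "f \<in> NM \<Longrightarrow> g \<in> NM \<Longrightarrow> sup f g \<in> NM"
  using NM.join lift2_max by metis

lemma ji_NM: "join_irreducible g \<Longrightarrow> g \<in> NM"
  by (simp add: join_irreducible_def)

lemma ji_prime:
  assumes g: "join_irreducible g" and x: "x \<in> NM" and y: "y \<in> NM" and le: "g \<le> sup x y"
  shows "g \<le> x \<or> g \<le> y"
proof -
  have gN: "g \<in> NM" using g by (simp add: join_irreducible_def)
  have eq: "g = sup (inf g x) (inf g y)"
  proof (rule ext)
    fix p
    have "g p \<le> max (x p) (y p)" using le by (simp add: le_fun_def sup_real_def)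
    thus "g p = sup (inf g x) (inf g y) p" by (auto simp: inf_real_def sup_real_def)
  qed
  have "g = inf g x \<or> g = inf g y"
    using g inf_NM[OF gN x] inf_NM[OF gN y] eq unfolding join_irreducible_def by blast
  thus ?thesis by (metis inf.cobounded2)
qed

lemma idem_pt: "idempotent h \<Longrightarrow> p \<in> cube \<Longrightarrow> nm_tnorm (h p) (h p) = h p"
  unfolding idempotent_def nm_conj_def lift2_def by (drule fun_cong[of _ _ p]) simp

lemma nonidem_small:
  assumes g: "join_irreducible g" and ni: "\<not> idempotent g"
  shows "g p \<le> 1/2"
proof -
  have gN: "g \<in> NM" using g by (simp add: join_irreducible_def)
  define d where "d = lift2 nm_tnorm g g"
  define e where "e = lift2 nm_impl d nm_bot"
  define k where "k = lift2 min g e"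
  have dN: "d \<in> NM" unfolding d_def by (rule NM.conj[OF gN gN])
  have eN: "e \<in> NM" unfolding e_def by (rule NM.impl[OF dN NM.bot])
  have kN: "k \<in> NM" unfolding k_def by (rule NM.meet[OF gN eN])
  have eq: "g = sup d k"
  proof (rule ext)
    fix q
    show "g q = sup d k q"
    proof (cases "q \<in> cube")
      case False thus ?thesis using NM_off[OF gN False] by (simp add: d_def e_def k_def lift2_def)
    next
      case True
      have r: "0 \<le> g q" "g q \<le> 1" using NM_range[OF gN] by auto
      show ?thesis using True r
        by (auto simp: d_def e_def k_def lift2_def nm_tnorm_def nm_impl_def nm_bot_def sup_real_def)
    qed
  qed
  have "g = d \<or> g = k" using g dN kN eq unfolding join_irreducible_def by blast
  moreover have "g \<noteq> d" using ni unfolding idempotent_def nm_conj_def d_def by metis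
  ultimately have gk: "g = k" by blast
  show ?thesis
  proof (cases "p \<in> cube")
    case False thus ?thesis using NM_off[OF gN False] by simp
  next
    case True
    have r: "0 \<le> g p" "g p \<le> 1" using NM_range[OF gN] by auto
    have "g p = k p" using gk by simp
    thus ?thesis using True r
      by (auto simp: d_def e_def k_def lift2_def nm_tnorm_def nm_impl_def nm_bot_def split: if_splits)
  qed
qed

lemma idem_chain:
  assumes g: "join_irreducible g" and h1: "join_irreducible h1" "idempotent h1" "h1 \<le> g"
    and h2: "join_irreducible h2" "idempotent h2" "h2 \<le> g"
  shows "h1 \<le> h2 \<or> h2 \<le> h1"
proof -
  have gN: "g \<in> NM" and h1N: "h1 \<in> NM" and h2N: "h2 \<in> NM" using g h1 h2 by (auto simp: join_irreducible_def)
  define a where "a = lift2 min g (lift2 nm_impl h1 h2)"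
  define b where "b = lift2 min g (lift2 nm_impl h2 h1)"
  have aN: "a \<in> NM" unfolding a_def by (intro NM.meet NM.impl gN h1N h2N)
  have bN: "b \<in> NM" unfolding b_def by (intro NM.meet NM.impl gN h1N h2N)
  have eq: "g = sup a b"
  proof (rule ext)
    fix q
    show "g q = sup a b q"
    proof (cases "q \<in> cube")
      case False thus ?thesis using NM_off[OF gN False] by (simp add: a_def b_def lift2_def)
    next
      case True
      have r: "0 \<le> g q" "g q \<le> 1" using NM_range[OF gN] by auto
      show ?thesis using True r
        by (auto simp: a_def b_def lift2_def nm_impl_def sup_real_def)
    qed
  qed
  have key: "h \<le> h'"
    if hh: "idempotent h" "h \<in> NM" "h' \<in> NM" "h \<le> g" "g = lift2 min g (lift2 nm_impl h h')" for h h'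
  proof (rule le_funI)
    fix p
    show "h p \<le> h' p"
    proof (cases "p \<in> cube")
      case False thus ?thesis using NM_off[OF hh(2) False] NM_off[OF hh(3) False] by simp
    next
      case True
      have z: "g p \<le> nm_impl (h p) (h' p)"
        using fun_cong[OF hh(5), of p] True by (simp add: lift2_def)
      have hg: "h p \<le> g p" using hh(4) by (simp add: le_fun_def)
      have id: "nm_tnorm (h p) (h p) = h p" using idem_pt[OF hh(1) True] .
      have r: "0 \<le> h' p" using NM_range[OF hh(3)] by auto
      show ?thesis
      proof (rule ccontr)
        assume c: "\<not> h p \<le> h' p"
        hence "h p > 1/2" using id r by (auto simp: nm_tnorm_def split: if_splits)
        thus False using z hg c by (auto simp: nm_impl_def split: if_splits)
      qed
    qed
  qed
  have "g = a \<or> g = b" using g aN bN eq unfolding join_irreducible_def by blast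
  thus ?thesis
  proof
    assume "g = a" thus ?thesis using key[of h1 h2] h1 h1N h2N unfolding a_def by blast
  next
    assume "g = b" thus ?thesis using key[of h2 h1] h2 h1N h2N unfolding b_def by blast
  qed
qed

definition A :: "(real^'n \<Rightarrow> real) \<Rightarrow> (real^'n \<Rightarrow> real) set" where
  "A x = {g. min_idem_ji g \<and> g \<le> x}"

lemma A_finite: "finite (A x)"
  by (rule finite_subset[OF _ finite_NM]) (auto simp: A_def min_idem_ji_def join_irreducible_def)

lemma A_sup: "x \<in> NM \<Longrightarrow> y \<in> NM \<Longrightarrow> A (sup x y) = A x \<union> A y"
proof -
  assume x: "x \<in> NM" and y: "y \<in> NM"
  show ?thesis
  proof (rule set_eqI)
    fix g
    show "g \<in> A (sup x y) \<longleftrightarrow> g \<in> A x \<union> A y"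
    proof
      assume "g \<in> A (sup x y)"
      hence g: "min_idem_ji g" "g \<le> sup x y" by (auto simp: A_def)
      hence "g \<le> x \<or> g \<le> y" using ji_prime[OF _ x y] unfolding min_idem_ji_def by blast
      thus "g \<in> A x \<union> A y" using g(1) by (auto simp: A_def)
    next
      assume "g \<in> A x \<union> A y"
      thus "g \<in> A (sup x y)" by (auto simp: A_def intro: le_supI1 le_supI2)
    qed
  qed
qed

lemma A_inf: "A (inf x y) = A x \<inter> A y"
  unfolding A_def by auto

lemma A_bot: "A nm_bot = {}"
proof -
  { fix h assume h: "join_irreducible h" "h \<le> nm_bot"
    have hN: "h \<in> NM" using h by (simp add: join_irreducible_def)
    have "h = nm_bot"
      by (rule ext) (use h NM_range[OF hN] in \<open>auto simp: nm_bot_def le_fun_def intro: order.antisym\<close>)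
    hence False using h by (simp add: join_irreducible_def) }
  thus ?thesis unfolding A_def min_idem_ji_def by blast
qed

lemma A_nonidem: "join_irreducible g \<Longrightarrow> \<not> idempotent g \<Longrightarrow> A g = {}"
proof -
  assume g: "join_irreducible g" "\<not> idempotent g"
  { fix h assume h: "join_irreducible h" "idempotent h" "h \<le> g"
    have hN: "h \<in> NM" using h by (simp add: join_irreducible_def)
    have "h = nm_bot"
    proof (rule ext)
      fix p
      show "h p = nm_bot p"
      proof (cases "p \<in> cube")
        case False thus ?thesis using NM_off[OF hN False] by (simp add: nm_bot_def)
      next
        case True
        have "h p \<le> g p" using h(3) by (simp add: le_fun_def)
        hence "h p \<le> 1/2" using nonidem_small[OF g, of p] by linarith
        thus ?thesis using idem_pt[OF h(2) True] by (auto simp: nm_tnorm_def nm_bot_def split: if_splits)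
      qed
    qed
    hence False using h by (simp add: join_irreducible_def) }
  thus ?thesis unfolding A_def min_idem_ji_def by blast
qed

lemma A_idem: "join_irreducible g \<Longrightarrow> idempotent g \<Longrightarrow> card (A g) = 1"
proof -
  assume g: "join_irreducible g" "idempotent g"
  define S where "S = {h. join_irreducible h \<and> idempotent h \<and> h \<le> g}"
  have fS: "finite S" by (rule finite_subset[OF _ finite_NM]) (auto simp: S_def join_irreducible_def)
  have "g \<in> S" using g by (simp add: S_def)
  then obtain m where m: "m \<in> S" "\<forall>b\<in>S. b \<le> m \<longrightarrow> m = b"
    using finite_has_minimal[OF fS] by blast
  have mA: "m \<in> A g"
    using m unfolding A_def S_def min_idem_ji_def by (auto intro: order_trans)
  have "A g = {m}"
  proof
    show "A g \<subseteq> {m}"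
    proof
      fix h assume "h \<in> A g"
      hence h: "min_idem_ji h" "h \<le> g" by (auto simp: A_def)
      have mm: "min_idem_ji m" "m \<le> g" using mA by (auto simp: A_def)
      have "h \<le> m \<or> m \<le> h" using idem_chain[OF g(1), of h m] h mm unfolding min_idem_ji_def by blast
      hence "h = m"
      proof
        assume "h \<le> m" thus "h = m" using mm(1) h(1) unfolding min_idem_ji_def by blast
      next
        assume "m \<le> h" thus "h = m" using mm(1) h(1) unfolding min_idem_ji_def by (metis)
      qed
      thus "h \<in> {m}" by simp
    qed
  qed (use mA in auto)
  thus ?thesis by simp
qed

definition mu :: "(real^'n \<Rightarrow> real) \<Rightarrow> real" where
  "mu x = (if x \<in> NM then real (card (A x)) else 0)"

lemma mu_val: "valuation_on_NM mu"
  unfolding valuation_on_NM_def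
proof (intro ballI)
  fix x y :: "real^'n \<Rightarrow> real" assume x: "x \<in> NM" and y: "y \<in> NM"
  have "card (A x) + card (A y) = card (A x \<union> A y) + card (A x \<inter> A y)"
    using card_Un_Int[OF A_finite A_finite] .
  hence "real (card (A x)) + real (card (A y)) = real (card (A (sup x y))) + real (card (A (inf x y)))"
    unfolding A_sup[OF x y] A_inf by (metis of_nat_add)
  thus "mu x + mu y = mu (sup x y) + mu (inf x y)"
    using x y sup_NM[OF x y] inf_NM[OF x y] by (simp add: mu_def)
qed

lemma val_unique:
  assumes v: "valuation_on_NM \<nu>" and w: "valuation_on_NM \<mu>" and b: "\<nu> nm_bot = \<mu> nm_bot"
    and j: "\<forall>g. join_irreducible g \<longrightarrow> \<nu> g = \<mu> g"
  shows "x \<in> NM \<Longrightarrow> \<nu> x = \<mu> x"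
proof (induction "card {y\<in>NM. y < x}" arbitrary: x rule: less_induct)
  case less
  show ?case
  proof (cases "x = nm_bot \<or> join_irreducible x")
    case True thus ?thesis using b j by blast
  next
    case False
    then obtain y z where yz: "y \<in> NM" "z \<in> NM" "x = sup y z" "x \<noteq> y" "x \<noteq> z"
      using less.prems unfolding join_irreducible_def by blast
    have yl: "y < x" using yz by (metis sup.cobounded1 order.not_eq_order_implies_strict)
    have zl: "z < x" using yz by (metis sup.cobounded2 order.not_eq_order_implies_strict)
    have il: "inf y z < x" using yl by (meson inf.cobounded1 order.strict_trans1)
    have iN: "inf y z \<in> NM" using inf_NM yz by blast
    have dec: "card {w\<in>NM. w < u} < card {w\<in>NM. w < x}" if "u \<in> NM" "u < x" for u
    proof (rule psubset_card_mono)
      show "finite {w\<in>NM. w < x}" by (rule finite_subset[OF _ finite_NM]) auto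
      show "{w\<in>NM. w < u} \<subset> {w\<in>NM. w < x}"
        using that by (auto intro: order.strict_trans)
    qed
    have "\<nu> y = \<mu> y" using less.hyps[OF dec[OF yz(1) yl] yz(1)] .
    moreover have "\<nu> z = \<mu> z" using less.hyps[OF dec[OF yz(2) zl] yz(2)] .
    moreover have "\<nu> (inf y z) = \<mu> (inf y z)" using less.hyps[OF dec[OF iN il] iN] .
    moreover have "\<nu> y + \<nu> z = \<nu> x + \<nu> (inf y z)" using v yz unfolding valuation_on_NM_def by blast
    moreover have "\<mu> y + \<mu> z = \<mu> x + \<mu> (inf y z)" using w yz unfolding valuation_on_NM_def by blast
    ultimately show ?thesis by linarith
  qed
qed

lemma chi_plus_mu: "chi_plus = mu"
  unfolding chi_plus_def
proof (rule the_equality)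
  show "valuation_on_NM mu \<and> mu nm_bot = 0 \<and>
      (\<forall>g. join_irreducible g \<longrightarrow> mu g = (if idempotent g then 1 else 0)) \<and>
      (\<forall>x. x \<notin> NM \<longrightarrow> mu x = 0)"
  proof (intro conjI allI impI)
    show "valuation_on_NM mu" by (rule mu_val)
    show "mu nm_bot = 0" by (simp add: mu_def NM.bot A_bot)
    fix g :: "real^'n \<Rightarrow> real"
    assume g: "join_irreducible g"
    show "mu g = (if idempotent g then 1 else 0)"
      using A_idem[OF g] A_nonidem[OF g] ji_NM[OF g] by (simp add: mu_def)
  next
    fix x :: "real^'n \<Rightarrow> real" assume "x \<notin> NM" thus "mu x = 0" by (simp add: mu_def)
  qed
next
  fix \<nu> assume P: "valuation_on_NM \<nu> \<and> \<nu> nm_bot = 0 \<and>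
      (\<forall>g. join_irreducible g \<longrightarrow> \<nu> g = (if idempotent g then 1 else 0)) \<and>
      (\<forall>x. x \<notin> NM \<longrightarrow> \<nu> x = 0)"
  have j: "\<forall>g. join_irreducible g \<longrightarrow> \<nu> g = mu g"
    using P A_idem A_nonidem ji_NM by (auto simp: mu_def)
  have b: "\<nu> nm_bot = mu nm_bot" using P by (simp add: mu_def NM.bot A_bot)
  show "\<nu> = mu"
  proof (rule ext)
    fix x
    show "\<nu> x = mu x"
      using val_unique[OF conjunct1[OF P] mu_val b j, of x] P by (cases "x \<in> NM") (auto simp: mu_def)
  qed
qed

theorem lemma3:
  fixes x :: "real^'n \<Rightarrow> real"
  assumes "x \<in> NM"
  shows "chi_plus x = real (card {g. min_idem_ji g \<and> g \<le> x})"
  using assms by (simp add: chi_plus_mu mu_def A_def)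

end
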